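(* Let $|q|<1$ and let $(\alpha_n,\beta_n)$ be a Bailey pair with respect to $a$, with $|aq|<1$, no denominator vanishing, and all series converging absolutely. Then $$\sum_{n=1}^{\infty} (q;q)_{n-1}(-a)^{n}q^{n(n+1)/2}\beta_n - \sum_{n=1}^{\infty}\frac{(q;q)_{n-1}(-a)^{n}q^{n(n+1)/2}}{(q a ;q)_n}\alpha_n=f_2(a,q),$$ where $f_2(a,q)$ is given by each of the following (equal) expressions: $$f_2(a,q)=-\sum_{n=1}^{\infty} \frac{(1-a q^{2n})q^{n^2} a^{n}}{(1-a q^{n})(1-q^n)}=\sum_{n=1}^{\infty} \frac{q^{n(n+1)/2}(-a)^{n}}{(q a;q)_{n}(1-q^n)}=-\sum_{n=1}^{\infty}\frac{a q^n}{1-aq^n}.$$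
   Context: Notation: $(x;q)_n=(1-x)(1-xq)\cdots(1-xq^{n-1})$, $(x;q)_0=1$. A Bailey pair with respect to $a$ (base $q$) is a pair of sequences $(\alpha_n,\beta_n)_{n\ge0}$ with $\alpha_0=\beta_0=1$ and, for $n>0$, $\beta_n=\sum_{j=0}^{n}\frac{\alpha_j}{(q;q)_{n-j}(aq;q)_{n+j}}$. *)

theory Defs
  imports "HOL-Analysis.Analysis"
begin

definition qpoch :: "complex \<Rightarrow> complex \<Rightarrow> nat \<Rightarrow> complex" where
  "qpoch x q n = (\<Prod>k<n. 1 - x * q ^ k)"

definition bailey_pair :: "complex \<Rightarrow> complex \<Rightarrow> (nat \<Rightarrow> complex) \<Rightarrow> (nat \<Rightarrow> complex) \<Rightarrow> bool" where
  "bailey_pair a q \<alpha> \<beta> \<longleftrightarrow>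
     \<alpha> 0 = 1 \<and> \<beta> 0 = 1 \<and>
     (\<forall>n>0. \<beta> n = (\<Sum>j=0..n. \<alpha> j / (qpoch q q (n - j) * qpoch (a * q) q (n + j))))"

end

theory Submission
  imports Defs
begin


definition tri :: "nat \<Rightarrow> nat" where "tri n = n * (n + 1) div 2"

lemma tri_0[simp]: "tri 0 = 0" by (simp add: tri_def)

lemma tri_Suc: "tri (Suc n) = tri n + Suc n"
proof -
  have "Suc n * (Suc n + 1) = n * (n + 1) + 2 * Suc n" by simp
  then show ?thesis unfolding tri_def by simp
qed

lemma tri_add: "tri (j + m) = tri j + j * m + tri m"
  by (induction m) (simp_all add: tri_Suc)

lemma tri_ge: "n \<le> tri n"
  by (induction n) (simp_all add: tri_Suc)

lemma tri_le_sq: "tri n \<le> n ^ 2"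
proof -
  have "n * (n+1) \<le> 2 * n^2" by (simp add: power2_eq_square algebra_simps)
  then show ?thesis unfolding tri_def by linarith
qed

lemma qpoch_0[simp]: "qpoch x q 0 = 1" by (simp add: qpoch_def)

lemma qpoch_Suc: "qpoch x q (Suc n) = qpoch x q n * (1 - x * q ^ n)"
  by (simp add: qpoch_def)

lemma qpoch_add: "qpoch x q (m + n) = qpoch x q m * qpoch (x * q ^ m) q n"
  by (induction n) (simp_all add: qpoch_Suc power_add mult.assoc)

lemma qpoch_Suc': "qpoch x q (Suc n) = (1 - x) * qpoch (x * q) q n"
  using qpoch_add[of x q 1 n] by (simp add: qpoch_def)

lemma qpoch_upper:
  assumes "norm q < 1"
  shows "norm (qpoch x q n) \<le> exp (norm x / (1 - norm q))"
proof -
  have "norm (qpoch x q n) \<le> (\<Prod>k<n. norm (1 - x * q ^ k))"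
    unfolding qpoch_def by (rule norm_prod_le)
  also have "\<dots> \<le> (\<Prod>k<n. exp (norm x * norm q ^ k))"
  proof (rule prod_mono)
    fix k assume "k \<in> {..<n}"
    have "norm (1 - x * q ^ k) \<le> 1 + norm x * norm q ^ k"
      using norm_triangle_ineq4[of 1 "x * q^k"] by (simp add: norm_mult norm_power)
    also have "\<dots> \<le> exp (norm x * norm q ^ k)" by simp
    finally show "0 \<le> norm (1 - x * q ^ k) \<and> norm (1 - x * q ^ k) \<le> exp (norm x * norm q ^ k)"
      by simp
  qed
  also have "\<dots> = exp (\<Sum>k<n. norm x * norm q ^ k)" by (simp add: exp_sum)
  also have "\<dots> \<le> exp (norm x / (1 - norm q))"
  proof -
    have "(\<Sum>k<n. norm q ^ k) = (1 - norm q ^ n) / (1 - norm q)"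
      using assms by (simp add: sum_gp_strict)
    also have "\<dots> \<le> 1 / (1 - norm q)"
      using assms by (simp add: divide_right_mono)
    finally have "norm x * (\<Sum>k<n. norm q ^ k) \<le> norm x * (1 / (1 - norm q))"
      by (rule mult_left_mono) simp
    then show ?thesis by (simp add: sum_distrib_left)
  qed
  finally show ?thesis .
qed

lemma exp_le_one_minus:
  fixes t s :: real
  assumes "0 \<le> t" "t \<le> s" "s < 1"
  shows "exp (- (t / (1 - s))) \<le> 1 - t"
proof -
  have t1: "t < 1" using assms by simp
  have "1 + t / (1 - t) \<le> exp (t / (1 - t))" by (rule exp_ge_add_one_self)
  moreover have "1 + t / (1 - t) = 1 / (1 - t)" using t1 by (simp add: field_simps)
  ultimately have h: "1 / (1 - t) \<le> exp (t / (1 - t))" by simp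
  have "exp (- (t / (1 - t))) = 1 / exp (t / (1 - t))" by (simp add: exp_minus field_simps)
  also have "\<dots> \<le> 1 / (1 / (1 - t))"
    using h t1 by (intro divide_left_mono) auto
  also have "\<dots> = 1 - t" by simp
  finally have h2: "exp (- (t / (1 - t))) \<le> 1 - t" .
  have "t / (1 - t) \<le> t / (1 - s)"
    using assms by (intro divide_left_mono) auto
  then have "exp (- (t / (1 - s))) \<le> exp (- (t / (1 - t)))" by simp
  with h2 show ?thesis by linarith
qed

lemma qpoch_lower:
  assumes "norm q < 1" "norm x \<le> s" "s < 1"
  shows "exp (- (s / ((1 - s) * (1 - norm q)))) \<le> norm (qpoch x q n)"
proof -
  have s0: "0 \<le> s" using assms(2) norm_ge_zero order_trans by blast
  have "exp (- (s / ((1 - s) * (1 - norm q)))) \<le> exp (- (\<Sum>k<n. s * norm q ^ k / (1 - s)))"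
  proof -
    have "(\<Sum>k<n. norm q ^ k) = (1 - norm q ^ n) / (1 - norm q)"
      using assms by (simp add: sum_gp_strict)
    also have "\<dots> \<le> 1 / (1 - norm q)"
      using assms by (simp add: divide_right_mono)
    finally have h: "(\<Sum>k<n. norm q ^ k) \<le> 1 / (1 - norm q)" .
    have "(\<Sum>k<n. s * norm q ^ k / (1 - s)) = s / (1 - s) * (\<Sum>k<n. norm q ^ k)"
      by (simp add: sum_distrib_left)
    also have "\<dots> \<le> s / (1 - s) * (1 / (1 - norm q))"
      using h s0 assms by (intro mult_left_mono) auto
    finally show ?thesis by simp
  qed
  also have "\<dots> = (\<Prod>k<n. exp (- (s * norm q ^ k / (1 - s))))"
    by (simp add: exp_sum[symmetric] sum_negf)
  also have "\<dots> \<le> (\<Prod>k<n. exp (- ((s * norm q ^ k) / (1 - s * norm q ^ k))))"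
  proof (rule prod_mono)
    fix k assume "k \<in> {..<n}"
    have "norm q ^ k \<le> 1" using assms by (simp add: power_le_one)
    then have "s * norm q ^ k \<le> s" using s0 by (simp add: mult_left_le)
    then have "1 - s \<le> 1 - s * norm q ^ k" by simp
    moreover have "0 \<le> s * norm q ^ k" using s0 by simp
    ultimately have "(s * norm q ^ k) / (1 - s * norm q ^ k) \<le> s * norm q ^ k / (1 - s)"
      using assms by (intro divide_left_mono) auto
    then show "0 \<le> exp (- (s * norm q ^ k / (1 - s))) \<and> exp (- (s * norm q ^ k / (1 - s))) \<le> exp (- ((s * norm q ^ k) / (1 - s * norm q ^ k)))"
      by simp
  qed
  also have "\<dots> \<le> (\<Prod>k<n. norm (1 - x * q ^ k))"
  proof (rule prod_mono)
    fix k assume "k \<in> {..<n}"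
    have qk: "norm q ^ k \<le> 1" using assms by (simp add: power_le_one)
    have t0: "0 \<le> s * norm q ^ k" using s0 by simp
    have ts: "s * norm q ^ k \<le> s * norm q ^ k" by simp
    have ts1: "s * norm q ^ k < 1" using qk s0 assms
      by (meson le_less_trans mult_left_le)
    have "exp (- ((s * norm q ^ k) / (1 - s * norm q ^ k))) \<le> 1 - s * norm q ^ k"
      by (rule exp_le_one_minus[OF t0 ts ts1])
    also have "\<dots> \<le> 1 - norm x * norm q ^ k"
      using assms by (simp add: mult_right_mono)
    also have "\<dots> \<le> norm (1 - x * q ^ k)"
      using norm_triangle_ineq2[of 1 "x * q^k"] by (simp add: norm_mult norm_power)
    finally show "0 \<le> exp (- ((s * norm q ^ k) / (1 - s * norm q ^ k))) \<and> exp (- ((s * norm q ^ k) / (1 - s * norm q ^ k))) \<le> norm (1 - x * q ^ k)"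
      by simp
  qed
  also have "\<dots> = norm (qpoch x q n)" unfolding qpoch_def by (simp add: prod_norm)
  finally show ?thesis .
qed

lemma qpoch_nonzero:
  assumes "norm q < 1" "norm x < 1"
  shows "qpoch x q n \<noteq> 0"
proof -
  have "0 < exp (- (norm x / ((1 - norm x) * (1 - norm q))))" by simp
  also have "\<dots> \<le> norm (qpoch x q n)" by (rule qpoch_lower) (use assms in auto)
  finally show ?thesis by auto
qed

lemma summable_tri:
  fixes L r :: real
  assumes "0 \<le> L" "0 \<le> r" "r < 1"
  shows "summable (\<lambda>m. L ^ m * r ^ tri m)"
proof -
  have "(\<lambda>n. r ^ n) \<longlonglongrightarrow> 0" by (rule LIMSEQ_power_zero) (use assms in simp)
  then have "(\<lambda>n. r ^ Suc n) \<longlonglongrightarrow> 0" by (rule LIMSEQ_Suc)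
  then have "(\<lambda>n. L * r ^ Suc n) \<longlonglongrightarrow> L * 0"
    by (intro tendsto_mult tendsto_const)
  then have "eventually (\<lambda>n. L * r ^ Suc n < 1/2) sequentially"
    by (intro order_tendstoD) auto
  then obtain N where N: "\<And>n. n \<ge> N \<Longrightarrow> L * r ^ Suc n < 1/2"
    by (auto simp: eventually_sequentially)
  show ?thesis
  proof (rule summable_ratio_test[of "1/2" N])
    fix n assume "n \<ge> N"
    have "norm (L ^ Suc n * r ^ tri (Suc n)) = (L * r ^ Suc n) * (L ^ n * r ^ tri n)"
      using assms by (simp add: tri_Suc power_add abs_mult)
    also have "\<dots> \<le> 1/2 * (L ^ n * r ^ tri n)"
      using N[OF \<open>n \<ge> N\<close>] assms by (intro mult_right_mono) auto
    also have "\<dots> = 1/2 * norm (L ^ n * r ^ tri n)" using assms by simp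
    finally show "norm (L ^ Suc n * r ^ tri (Suc n)) \<le> 1/2 * norm (L ^ n * r ^ tri n)" .
  qed simp
qed



definition TT :: "complex \<Rightarrow> complex \<Rightarrow> nat \<Rightarrow> nat \<Rightarrow> complex" where
  "TT q A j m = qpoch (q ^ j) q m * (- A) ^ m * q ^ tri m / (qpoch q q m * qpoch (A * q ^ (j + 1)) q m)"

lemma norm_Aqj:
  fixes A q :: complex
  assumes "norm q < 1" "norm (A * q) < 1"
  shows "norm (A * q ^ (j + 1)) \<le> norm (A * q)"
proof -
  have "A * q ^ (j + 1) = (A * q) * q ^ j" by (simp add: mult.assoc)
  then have "norm (A * q ^ (j + 1)) = norm (A * q) * norm q ^ j"
    by (simp only: norm_mult norm_power)
  also have "\<dots> \<le> norm (A * q) * 1"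
    using assms by (intro mult_left_mono) (auto simp: power_le_one)
  finally show ?thesis by simp
qed

lemma TT_bound:
  assumes "norm q < 1" "norm (A * q) < 1"
  shows "\<exists>K. \<forall>m. norm (TT q A j m) \<le> K * (norm A ^ m * norm q ^ tri m)"
proof -
  define s where "s = norm (A * q)"
  define d1 where "d1 = exp (- (norm q / ((1 - norm q) * (1 - norm q))))"
  define d2 where "d2 = exp (- (s / ((1 - s) * (1 - norm q))))"
  define M where "M = exp (norm (q ^ j) / (1 - norm q))"
  have d1: "\<And>m. d1 \<le> norm (qpoch q q m)" unfolding d1_def
    by (rule qpoch_lower) (use assms in auto)
  have d2: "\<And>m. d2 \<le> norm (qpoch (A * q ^ (j + 1)) q m)" unfolding d2_def
    by (rule qpoch_lower) (use assms norm_Aqj[OF assms] in \<open>auto simp: s_def\<close>)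
  have M: "\<And>m. norm (qpoch (q ^ j) q m) \<le> M" unfolding M_def
    by (rule qpoch_upper) (use assms in auto)
  have d1p: "0 < d1" "0 < d2" "0 \<le> M" unfolding d1_def d2_def M_def by auto
  show ?thesis
  proof (intro exI allI)
    fix m
    have "norm (TT q A j m) = norm (qpoch (q ^ j) q m) * (norm A ^ m * norm q ^ tri m) /
        (norm (qpoch q q m) * norm (qpoch (A * q ^ (j + 1)) q m))"
      by (simp add: TT_def norm_mult norm_divide norm_power)
    also have "\<dots> \<le> M * (norm A ^ m * norm q ^ tri m) / (d1 * d2)"
      using d1 d2 M d1p by (intro frac_le mult_right_mono mult_mono) auto
    also have "\<dots> = M / (d1 * d2) * (norm A ^ m * norm q ^ tri m)" by simp
    finally show "norm (TT q A j m) \<le> M / (d1 * d2) * (norm A ^ m * norm q ^ tri m)" .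
  qed
qed

lemma TT_summable:
  assumes "norm q < 1" "norm (A * q) < 1"
  shows "summable (TT q A j)"
proof -
  obtain K where K: "\<And>m. norm (TT q A j m) \<le> K * (norm A ^ m * norm q ^ tri m)"
    using TT_bound[OF assms] by blast
  have "summable (\<lambda>m. norm A ^ m * norm q ^ tri m)"
    by (rule summable_tri) (use assms in auto)
  then have "summable (\<lambda>m. K * (norm A ^ m * norm q ^ tri m))" by (rule summable_mult)
  then show ?thesis by (rule summable_comparison_test') (rule K)
qed

lemma one_minus_qpow_nz:
  assumes "norm (q::complex) < 1" "n \<ge> 1"
  shows "1 - q ^ n \<noteq> 0"
proof
  assume "1 - q ^ n = 0"
  then have "norm (q ^ n) = 1" by (metis eq_iff_diff_eq_0 norm_one)
  moreover have "norm (q ^ n) < 1"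
    using assms by (simp add: norm_power power_less_one_iff)
  ultimately show False by simp
qed

lemma g1: "(v::complex) \<noteq> 0 \<Longrightarrow> v * (W * (X / (u * v))) = W * (X / u)"
  by (cases "u = 0") (simp_all add: field_simps)

lemma g3:
  fixes A q y z u :: complex
  assumes "u \<noteq> 0" "u = 1 - q * y"
  shows "(1 - z * q * y) * (- A) * (y * q) / u + A * (q * z * y) = (1 - z) * (- A) * (y * q) / u"
proof -
  have "A * (q * z * y) = A * (q * z * y) * u / u" using assms(1) by simp
  then have "(1 - z * q * y) * (- A) * (y * q) / u + A * (q * z * y)
     = ((1 - z * q * y) * (- A) * (y * q) + A * (q * z * y) * u) / u"
    by (metis add_divide_distrib)
  also have "(1 - z * q * y) * (- A) * (y * q) + A * (q * z * y) * u = (1 - z) * (- A) * (y * q)"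
    unfolding assms(2) by (simp add: algebra_simps)
  finally show ?thesis .
qed

lemma TT_rec:
  assumes "norm q < 1" "norm (A * q) < 1"
  shows "(1 - A * q ^ (j + Suc k + 1)) * TT q A (j + 1) (Suc k) + A * q ^ (j + Suc k) * TT q A (j + 1) k
     = (1 - A * q ^ (j + 1)) * TT q A j (Suc k)"
proof -
  define P where "P = qpoch (q ^ (j + 1)) q k"
  define Q where "Q = qpoch q q k"
  define R where "R = qpoch (A * q ^ (j + 2)) q k"
  define Z where "Z = (- A) ^ k * q ^ tri k"
  define y where "y = q ^ k"
  define z where "z = q ^ j"
  have Qnz: "Q \<noteq> 0" unfolding Q_def by (rule qpoch_nonzero) (use assms in auto)
  have Rnz: "R \<noteq> 0" unfolding R_def
    using qpoch_nonzero[OF assms(1), of "A * q ^ (j + 1 + 1)" k] norm_Aqj[OF assms, of "j+1"] assms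
    by (simp add: numeral_2_eq_2)
  have n1: "1 - q * y \<noteq> 0" unfolding y_def
    using one_minus_qpow_nz[OF assms(1), of "Suc k"] by simp
  have n2: "1 - A * q ^ (j + 2) * y \<noteq> 0"
    using qpoch_nonzero[OF assms(1), of "A * q ^ (j + 1 + 1)" "Suc k"] norm_Aqj[OF assms, of "j+1"] assms
    by (simp add: qpoch_Suc y_def numeral_2_eq_2)
  have n3: "1 - A * q * z \<noteq> 0"
    using qpoch_nonzero[OF assms(1), of "A * q ^ (j + 1)" "Suc 0"] norm_Aqj[OF assms, of "j"] assms
    by (simp add: qpoch_Suc z_def mult_ac)
  define W where "W = P * Z / (Q * R)"
  define u where "u = 1 - q * y"
  define v where "v = 1 - A * q ^ (j + 2) * y"
  define t where "t = 1 - A * q * z"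
  have f1: "qpoch (q^j) q (Suc k) = (1 - z) * P"
    using qpoch_Suc'[of "q^j" q k] by (simp add: P_def z_def power_add mult_ac)
  have f2: "qpoch (A * q^(j+1)) q (Suc k) = t * R"
    using qpoch_Suc'[of "A * q^(j+1)" q k] by (simp add: t_def R_def z_def power_add numeral_2_eq_2 mult_ac)
  have f3: "qpoch q q (Suc k) = Q * u" by (simp add: qpoch_Suc Q_def y_def u_def)
  have f4: "qpoch (q^(j+1)) q (Suc k) = P * (1 - z * q * y)"
    by (simp add: qpoch_Suc P_def z_def y_def power_add mult_ac)
  have f5: "qpoch (A * q^(j+1+1)) q (Suc k) = R * v"
    by (simp add: qpoch_Suc R_def v_def y_def numeral_2_eq_2 mult_ac)
  have f6: "(- A) ^ Suc k * q ^ tri (Suc k) = Z * ((- A) * (y * q))"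
    by (simp add: Z_def y_def tri_Suc power_add mult_ac)
  have e1: "TT q A (j + 1) (Suc k) = W * (((1 - z * q * y) * (- A) * (y * q)) / (u * v))"
  proof -
    have "TT q A (j + 1) (Suc k) = (P * (1 - z * q * y)) * (Z * ((- A) * (y * q))) / ((Q * u) * (R * v))"
      unfolding TT_def f3 f4 f5 f6[symmetric] by (simp add: mult.assoc)
    also have "\<dots> = W * (((1 - z * q * y) * (- A) * (y * q)) / (u * v))"
      unfolding W_def by (simp add: mult_ac)
    finally show ?thesis .
  qed
  have e2: "TT q A (j + 1) k = W"
    unfolding TT_def P_def Q_def R_def Z_def W_def by (simp add: numeral_2_eq_2 mult_ac)
  have e3: "TT q A j (Suc k) = W * (((1 - z) * (- A) * (y * q)) / (u * t))"
  proof -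
    have "TT q A j (Suc k) = ((1 - z) * P) * (Z * ((- A) * (y * q))) / ((Q * u) * (t * R))"
      unfolding TT_def f1 f2 f3 f6[symmetric] by (simp add: mult.assoc)
    also have "\<dots> = W * (((1 - z) * (- A) * (y * q)) / (u * t))"
      unfolding W_def by (simp add: mult_ac)
    finally show ?thesis .
  qed
  have e4: "1 - A * q ^ (j + Suc k + 1) = v" "q ^ (j + Suc k) = q * z * y" "1 - A * q ^ (j + 1) = t"
    unfolding y_def z_def v_def t_def by (simp_all add: power_add numeral_2_eq_2 mult_ac)
  have vnz: "v \<noteq> 0" using n2 v_def by simp
  have tnz: "t \<noteq> 0" using n3 t_def by simp
  have unz: "u \<noteq> 0" using n1 u_def by simp
  have "v * TT q A (j + 1) (Suc k) + A * (q * z * y) * TT q A (j + 1) k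
       = W * ((1 - z * q * y) * (- A) * (y * q) / u + A * (q * z * y))"
    unfolding e1 e2 g1[OF vnz] by (simp add: algebra_simps)
  also have "\<dots> = W * ((1 - z) * (- A) * (y * q) / u)" using g3[OF unz u_def] by simp
  also have "\<dots> = t * TT q A j (Suc k)"
    unfolding e3 using g1[OF tnz, of W "(1 - z) * (- A) * (y * q)" u] by (simp add: mult.commute)
  finally show ?thesis unfolding e4 by (simp add: mult_ac)
qed



lemma TT_0: "TT q A 0 m = (if m = 0 then 1 else 0)"
proof (cases m)
  case 0 then show ?thesis by (simp add: TT_def)
next
  case (Suc k) then show ?thesis by (simp add: TT_def qpoch_Suc')
qed

lemma TT_sums:
  fixes A q :: complex
  assumes hq: "norm q < 1" and hA: "norm (A * q) < 1"
  shows "TT q A j sums qpoch (A * q) q j"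
proof (induction j)
  case 0
  have "(\<lambda>m. if m = 0 then (\<lambda>_. 1::complex) m else 0) sums (\<lambda>_. 1::complex) 0" by (rule sums_single)
  then show ?case by (simp add: TT_0[abs_def])
next
  case (Suc j)
  define E where "E m = (if m = 0 then 0 else A * q ^ (j + m) * TT q A (j + 1) (m - 1))" for m
  have key: "TT q A (Suc j) m = (1 - A * q ^ (j + 1)) * TT q A j m + (E (Suc m) - E m)" for m
  proof (cases m)
    case 0
    then show ?thesis by (simp add: E_def TT_def)
  next
    case (Suc k)
    have "(1 - A * q ^ (j + Suc k + 1)) * TT q A (j + 1) (Suc k) + A * q ^ (j + Suc k) * TT q A (j + 1) k
     = (1 - A * q ^ (j + 1)) * TT q A j (Suc k)" by (rule TT_rec[OF hq hA])
    then show ?thesis unfolding Suc E_def by (simp add: algebra_simps)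
  qed
  have sumT: "summable (TT q A (j + 1))" by (rule TT_summable[OF hq hA])
  have lim1: "TT q A (j + 1) \<longlonglongrightarrow> 0" by (rule summable_LIMSEQ_zero[OF sumT])
  have lim2: "(\<lambda>m. A * q ^ (j + Suc m)) \<longlonglongrightarrow> 0"
  proof -
    have "(\<lambda>m. q ^ m) \<longlonglongrightarrow> 0" by (rule LIMSEQ_power_zero[OF hq])
    then have "(\<lambda>m. (A * q ^ Suc j) * q ^ m) \<longlonglongrightarrow> (A * q ^ Suc j) * 0"
      by (intro tendsto_mult tendsto_const)
    then show ?thesis by (simp add: power_add mult_ac)
  qed
  have "(\<lambda>m. E (Suc m)) \<longlonglongrightarrow> 0"
  proof -
    have "(\<lambda>m. A * q ^ (j + Suc m) * TT q A (j + 1) m) \<longlonglongrightarrow> 0 * 0"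
      by (intro tendsto_mult lim1 lim2)
    then show ?thesis by (simp add: E_def)
  qed
  then have limE: "E \<longlonglongrightarrow> 0" by (rule LIMSEQ_imp_Suc)
  have s1: "(\<lambda>m. (1 - A * q ^ (j + 1)) * TT q A j m) sums ((1 - A * q ^ (j + 1)) * qpoch (A * q) q j)"
    by (rule sums_mult[OF Suc.IH])
  have s2: "(\<lambda>m. E (Suc m) - E m) sums (0 - E 0)" by (rule telescope_sums[OF limE])
  have "(\<lambda>m. (1 - A * q ^ (j + 1)) * TT q A j m + (E (Suc m) - E m)) sums
      ((1 - A * q ^ (j + 1)) * qpoch (A * q) q j + (0 - E 0))"
    by (rule sums_add[OF s1 s2])
  moreover have "(1 - A * q ^ (j + 1)) * qpoch (A * q) q j + (0 - E 0) = qpoch (A * q) q (Suc j)"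
    by (simp add: E_def qpoch_Suc mult_ac)
  ultimately show ?case using key by simp
qed



lemma summable_on_prod_nonneg:
  fixes u b :: "nat \<Rightarrow> real"
  assumes u0: "\<And>j. 0 \<le> u j" and b0: "\<And>m. 0 \<le> b m" and su: "summable u" and sb: "summable b"
  shows "(\<lambda>(j, m). u j * b m) summable_on UNIV"
proof (rule nonneg_bdd_above_summable_on)
  show "\<And>x. x \<in> UNIV \<Longrightarrow> 0 \<le> (case x of (j, m) \<Rightarrow> u j * b m)"
    using u0 b0 by (auto simp: split_beta)
  show "bdd_above (sum (\<lambda>(j, m). u j * b m) ` {F. F \<subseteq> UNIV \<and> finite F})"
  proof (rule bdd_aboveI2)
    fix F :: "(nat \<times> nat) set" assume "F \<in> {F. F \<subseteq> UNIV \<and> finite F}"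
    then have fin: "finite F" by simp
    define N where "N = (\<Sum>p\<in>F. fst p + snd p)"
    have sub: "F \<subseteq> {..N} \<times> {..N}"
    proof
      fix p assume "p \<in> F"
      then have "fst p + snd p \<le> N" unfolding N_def by (rule member_le_sum) (use fin in auto)
      then show "p \<in> {..N} \<times> {..N}" by (cases p) auto
    qed
    have "sum (\<lambda>(j, m). u j * b m) F \<le> sum (\<lambda>(j, m). u j * b m) ({..N} \<times> {..N})"
      by (rule sum_mono2) (use sub u0 b0 in \<open>auto intro: mult_nonneg_nonneg\<close>)
    also have "\<dots> = (\<Sum>j\<le>N. u j) * (\<Sum>m\<le>N. b m)"
      by (simp add: sum_product sum.cartesian_product)
    also have "\<dots> \<le> suminf u * suminf b"
      by (intro mult_mono sum_le_suminf su sb) (use u0 b0 su sb in \<open>auto intro: sum_nonneg suminf_nonneg\<close>)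
    finally show "sum (\<lambda>(j, m). u j * b m) F \<le> suminf u * suminf b" .
  qed
qed

definition cc :: "complex \<Rightarrow> complex \<Rightarrow> nat \<Rightarrow> complex" where
  "cc a q n = qpoch q q (n - 1) * (- a) ^ n * q ^ tri n"

definition ww :: "complex \<Rightarrow> complex \<Rightarrow> nat \<Rightarrow> nat \<Rightarrow> complex" where
  "ww a q n j = 1 / (qpoch q q (n - j) * qpoch (a * q) q (n + j))"

lemma cc_Suc:
  assumes "n \<ge> 1"
  shows "cc a q (Suc n) = cc a q n * ((1 - q ^ n) * (- a) * q ^ Suc n)"
proof -
  obtain p where p: "n = Suc p" using assms by (cases n) auto
  show ?thesis unfolding cc_def p by (simp add: qpoch_Suc tri_Suc power_add mult_ac)
qed

lemma cc_bound:
  assumes hq: "norm q < 1" and j: "j \<ge> 1"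
  shows "norm (cc a q (j + m)) \<le> norm (cc a q j) * ((2 * norm a) ^ m * norm q ^ tri m)"
proof (induction m)
  case 0 then show ?case by simp
next
  case (Suc m)
  have "norm (cc a q (j + Suc m)) = norm (cc a q (j + m)) * (norm (1 - q ^ (j + m)) * norm a * norm q ^ Suc (j + m))"
    using cc_Suc[of "j + m" a q] j by (simp add: norm_mult norm_power)
  also have "\<dots> \<le> (norm (cc a q j) * ((2 * norm a) ^ m * norm q ^ tri m)) * (2 * norm a * norm q ^ Suc m)"
  proof (rule mult_mono[OF Suc.IH])
    have "norm (1 - q ^ (j + m)) \<le> 1 + norm (q ^ (j + m))" using norm_triangle_ineq4[of 1 "q ^ (j + m)"] by simp
    also have "\<dots> \<le> 2" using hq by (simp add: norm_power power_le_one)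
    finally have h1: "norm (1 - q ^ (j + m)) \<le> 2" .
    have h2: "norm q ^ Suc (j + m) \<le> norm q ^ Suc m"
      using hq by (intro power_decreasing) auto
    show "norm (1 - q ^ (j + m)) * norm a * norm q ^ Suc (j + m) \<le> 2 * norm a * norm q ^ Suc m"
      using h1 h2 by (intro mult_mono) auto
  qed auto
  also have "\<dots> = norm (cc a q j) * ((2 * norm a) ^ Suc m * norm q ^ tri (Suc m))"
    by (simp add: tri_Suc power_add mult_ac)
  finally show ?case .
qed

lemma ww_bound:
  assumes hq: "norm q < 1" and haq: "norm (a * q) < 1"
  shows "\<exists>W\<ge>0. \<forall>n j. norm (ww a q n j) \<le> W"
proof -
  define d1 where "d1 = exp (- (norm q / ((1 - norm q) * (1 - norm q))))"
  define d2 where "d2 = exp (- (norm (a * q) / ((1 - norm (a * q)) * (1 - norm q))))"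
  have d1: "\<And>m. d1 \<le> norm (qpoch q q m)" unfolding d1_def by (rule qpoch_lower) (use assms in auto)
  have d2: "\<And>m. d2 \<le> norm (qpoch (a * q) q m)" unfolding d2_def by (rule qpoch_lower) (use assms in auto)
  have p: "0 < d1" "0 < d2" unfolding d1_def d2_def by auto
  show ?thesis
  proof (intro exI[of _ "1 / (d1 * d2)"] conjI allI)
    fix n j
    have "norm (ww a q n j) = 1 / (norm (qpoch q q (n - j)) * norm (qpoch (a * q) q (n + j)))"
      by (simp add: ww_def norm_divide norm_mult)
    also have "\<dots> \<le> 1 / (d1 * d2)"
      using d1[of "n - j"] d2[of "n + j"] p by (intro divide_left_mono mult_mono mult_pos_pos) auto
    finally show "norm (ww a q n j) \<le> 1 / (d1 * d2)" .
  qed (use p in auto)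
qed

lemma inner_sums:
  fixes a q :: complex
  assumes hq: "norm q < 1" and haq: "norm (a * q) < 1" and j: "j \<ge> 1"
  shows "(\<lambda>m. cc a q (j + m) * ww a q (j + m) j) sums (cc a q j / qpoch (a * q) q j)"
proof -
  obtain i where i: "j = Suc i" using j by (cases j) auto
  define A where "A = a * q ^ j"
  have Aq: "A * q = a * q * q ^ j" unfolding A_def by (simp add: mult_ac)
  have nAq: "norm (A * q) < 1"
  proof -
    have "norm (A * q) = norm (a * q) * norm q ^ j" unfolding Aq by (simp add: norm_mult norm_power)
    also have "\<dots> \<le> norm (a * q) * 1" using hq by (intro mult_left_mono) (auto simp: power_le_one)
    finally show ?thesis using haq by simp
  qed
  have T: "TT q A j sums qpoch (A * q) q j" by (rule TT_sums[OF hq nAq])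
  define K where "K = cc a q j / qpoch (a * q) q (j + j)"
  have nz1: "qpoch (a * q) q j \<noteq> 0" by (rule qpoch_nonzero) (use assms in auto)
  have nz2: "qpoch (a * q) q (j + j) \<noteq> 0" by (rule qpoch_nonzero) (use assms in auto)
  have nz3: "qpoch (a * q * q ^ j) q j \<noteq> 0"
    using nz2 qpoch_add[of "a * q" q j j] by auto
  have split2: "qpoch (a * q) q (j + j) = qpoch (a * q) q j * qpoch (a * q * q ^ j) q j"
    by (rule qpoch_add)
  have val: "K * qpoch (A * q) q j = cc a q j / qpoch (a * q) q j"
    unfolding K_def Aq split2 using nz1 nz3 by (simp add: field_simps)
  have tm: "cc a q (j + m) * ww a q (j + m) j = K * TT q A j m" for m
  proof -
    have c1: "qpoch q q (j + m - 1) = qpoch q q i * qpoch (q ^ j) q m"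
      using qpoch_add[of q q i m] by (simp add: i)
    have c2: "qpoch (a * q) q (j + m + j) = qpoch (a * q) q (j + j) * qpoch (A * q ^ (j + 1)) q m"
      using qpoch_add[of "a * q" q "j + j" m] by (simp add: A_def power_add mult_ac add.commute add.left_commute)
    have c3: "(- a) ^ (j + m) * q ^ tri (j + m) = ((- a) ^ j * q ^ tri j) * ((- A) ^ m * q ^ tri m)"
    proof -
      have "(- A) ^ m = (- a) ^ m * (q ^ j) ^ m"
        unfolding A_def by (metis minus_mult_left power_mult_distrib)
      then show ?thesis by (simp add: tri_add power_add power_mult mult_ac)
    qed
    have c4: "qpoch q q (j - 1) = qpoch q q i" by (simp add: i)
    have "cc a q (j + m) * ww a q (j + m) j
        = (qpoch q q i * qpoch (q ^ j) q m) * (((- a) ^ j * q ^ tri j) * ((- A) ^ m * q ^ tri m)) /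
          (qpoch q q m * (qpoch (a * q) q (j + j) * qpoch (A * q ^ (j + 1)) q m))"
      unfolding cc_def ww_def c1[symmetric] c2[symmetric] c3[symmetric]
      by (simp add: mult_ac)
    also have "\<dots> = K * TT q A j m"
      unfolding K_def TT_def cc_def c4 by (simp add: mult_ac)
    finally show ?thesis .
  qed
  have "(\<lambda>m. K * TT q A j m) sums (K * qpoch (A * q) q j)" by (rule sums_mult[OF T])
  then show ?thesis unfolding val by (simp add: tm)
qed



lemma main_identity:
  fixes a q :: complex and \<alpha> \<beta> :: "nat \<Rightarrow> complex"
  assumes hq: "norm q < 1" and haq: "norm (a * q) < 1"
    and hbp: "bailey_pair a q \<alpha> \<beta>"
    and hca: "summable (\<lambda>n. norm (cc a q (Suc n) / qpoch (a * q) q (Suc n) * \<alpha> (Suc n)))"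
  shows "\<exists>Tot F0. (\<lambda>n. cc a q (Suc n) * \<beta> (Suc n)) sums Tot
     \<and> (\<lambda>n. cc a q (Suc n) / qpoch (a * q) q (Suc n) * \<alpha> (Suc n)) sums (Tot - F0)
     \<and> (\<lambda>n. cc a q (Suc n) * ww a q (Suc n) 0) sums F0"
proof -
  have \<alpha>0: "\<alpha> 0 = 1" and \<beta>def: "\<And>n. n > 0 \<Longrightarrow> \<beta> n = (\<Sum>j=0..n. \<alpha> j / (qpoch q q (n - j) * qpoch (a * q) q (n + j)))"
    using hbp unfolding bailey_pair_def by auto
  obtain W where W0: "W \<ge> 0" and W: "\<And>n j. norm (ww a q n j) \<le> W" using ww_bound[OF hq haq] by blast
  define d where "d m = (2 * norm a) ^ m * norm q ^ tri m" for m
  define b where "b m = d m + d (m - 1)" for m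
  define u where "u j = (if j = 0 then norm (cc a q 1) else norm (\<alpha> j) * norm (cc a q j))" for j
  define G where "G = (\<lambda>(j, m). if j + m = 0 then 0 else cc a q (j + m) * \<alpha> j * ww a q (j + m) j)"
  have d0: "\<And>m. 0 \<le> d m" unfolding d_def by simp
  have b0: "\<And>m. 0 \<le> b m" unfolding b_def using d0 by (simp add: add_nonneg_nonneg)
  have u0: "\<And>j. 0 \<le> u j" unfolding u_def by simp
  have sd: "summable d" unfolding d_def by (rule summable_tri) (use hq in auto)
  have sb: "summable b"
  proof -
    have "summable (\<lambda>m. d (Suc m - 1))" using sd by simp
    then have "summable (\<lambda>m. d (m - 1))" by (rule summable_Suc_iff[THEN iffD1])
    then show ?thesis unfolding b_def by (intro summable_add sd)
  qed
  define Mup where "Mup = exp (norm (a * q) / (1 - norm q))"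
  have su: "summable u"
  proof -
    have "summable (\<lambda>j. Mup * norm (cc a q (Suc j) / qpoch (a * q) q (Suc j) * \<alpha> (Suc j)))"
      by (rule summable_mult[OF hca])
    then have "summable (\<lambda>j. u (Suc j))"
    proof (rule summable_comparison_test'[where N=0])
      fix j :: nat
      have Pu: "norm (qpoch (a * q) q (Suc j)) \<le> Mup" unfolding Mup_def by (rule qpoch_upper[OF hq])
      have Pnz: "qpoch (a * q) q (Suc j) \<noteq> 0" by (rule qpoch_nonzero) (use hq haq in auto)
      have "norm (u (Suc j)) = norm (cc a q (Suc j) / qpoch (a * q) q (Suc j) * \<alpha> (Suc j)) * norm (qpoch (a * q) q (Suc j))"
        unfolding u_def using Pnz by (simp add: norm_mult norm_divide)
      also have "\<dots> \<le> norm (cc a q (Suc j) / qpoch (a * q) q (Suc j) * \<alpha> (Suc j)) * Mup"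
        by (rule mult_left_mono[OF Pu]) simp
      finally show "norm (u (Suc j)) \<le> Mup * norm (cc a q (Suc j) / qpoch (a * q) q (Suc j) * \<alpha> (Suc j))"
        by (simp add: mult.commute)
    qed
    then show ?thesis by (rule summable_Suc_iff[THEN iffD1])
  qed
  have Gb: "norm (G (j, m)) \<le> W * u j * b m" for j m
  proof (cases "j = 0")
    case True
    show ?thesis
    proof (cases m)
      case 0 then show ?thesis using True W0 u0 b0 by (simp add: G_def)
    next
      case (Suc k)
      have "norm (G (j, m)) = norm (cc a q (1 + k)) * norm (ww a q (Suc k) 0)"
        unfolding G_def using True Suc \<alpha>0 by (simp add: norm_mult)
      also have "\<dots> \<le> (norm (cc a q 1) * d k) * W"
        unfolding d_def by (intro mult_mono cc_bound[OF hq] W) auto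
      also have "\<dots> = W * u j * d k" using True by (simp add: u_def mult_ac)
      also have "\<dots> \<le> W * u j * b m"
        using Suc W0 u0 d0 by (intro mult_left_mono) (auto simp: b_def)
      finally show ?thesis .
    qed
  next
    case False
    then have j1: "j \<ge> 1" by simp
    have "norm (G (j, m)) = norm (cc a q (j + m)) * norm (\<alpha> j) * norm (ww a q (j + m) j)"
      unfolding G_def using False by (simp add: norm_mult)
    also have "\<dots> \<le> (norm (cc a q j) * d m) * norm (\<alpha> j) * W"
      unfolding d_def by (intro mult_mono cc_bound[OF hq j1] W) auto
    also have "\<dots> \<le> W * u j * b m"
    proof -
      have "(norm (cc a q j) * d m) * norm (\<alpha> j) * W = W * u j * d m"
        using False by (simp add: u_def mult_ac)
      also have "\<dots> \<le> W * u j * b m"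
        using W0 u0 d0 by (intro mult_left_mono) (auto simp: b_def)
      finally show ?thesis .
    qed
    finally show ?thesis .
  qed
  have gsum: "(\<lambda>(j, m). (W * u j) * b m) summable_on UNIV"
    by (rule summable_on_prod_nonneg) (use W0 u0 b0 sb su in \<open>auto intro: summable_mult\<close>)
  have Gabs: "(\<lambda>x. norm (G x)) summable_on UNIV"
    by (rule summable_on_comparison_test[OF gsum]) (use Gb in \<open>auto simp: split_beta\<close>)
  have Gs: "G summable_on UNIV" by (rule abs_summable_summable[OF Gabs])
  define Tot where "Tot = infsum G UNIV"
  have HG: "(G has_sum Tot) UNIV" unfolding Tot_def using Gs by simp
  define F0 where "F0 = (\<Sum>m. G (0, m))"
  define R where "R j = (if j = 0 then F0 else \<alpha> j * (cc a q j / qpoch (a * q) q j))" for j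
  have rowsum: "summable (\<lambda>m. norm (G (j, m)))" for j
    by (rule summable_comparison_test'[where N=0, OF summable_mult[OF sb, of "W * u j"]]) (use Gb in simp)
  have rows: "((\<lambda>m. G (j, m)) has_sum R j) UNIV" for j
  proof (rule norm_summable_imp_has_sum[OF rowsum])
    show "(\<lambda>m. G (j, m)) sums R j"
    proof (cases "j = 0")
      case True
      have "summable (\<lambda>m. G (0, m))" using rowsum[of 0] by (rule summable_norm_cancel)
      then show ?thesis using True by (simp add: R_def F0_def summable_sums)
    next
      case False
      then have j1: "j \<ge> 1" by simp
      have "(\<lambda>m. \<alpha> j * (cc a q (j + m) * ww a q (j + m) j)) sums (\<alpha> j * (cc a q j / qpoch (a * q) q j))"
        by (rule sums_mult[OF inner_sums[OF hq haq j1]])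
      then show ?thesis using False by (simp add: R_def G_def mult_ac)
    qed
  qed
  have "(R has_sum Tot) UNIV"
    by (rule has_sum_Sigma'[where B="\<lambda>_. UNIV", OF _ rows]) (use HG in simp)
  then have Rs: "R sums Tot" by (rule has_sum_imp_sums)
  have sA: "(\<lambda>n. cc a q (Suc n) / qpoch (a * q) q (Suc n) * \<alpha> (Suc n)) sums (Tot - F0)"
  proof -
    have "(\<lambda>n. R (Suc n)) sums (Tot - F0)"
      using Rs by (subst sums_Suc_iff) (simp add: R_def)
    then show ?thesis by (simp add: R_def mult_ac)
  qed
  have s0: "(\<lambda>n. cc a q (Suc n) * ww a q (Suc n) 0) sums F0"
  proof -
    have "summable (\<lambda>m. G (0, m))" using rowsum[of 0] by (rule summable_norm_cancel)
    then have "(\<lambda>m. G (0, m)) sums F0" unfolding F0_def by (rule summable_sums)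
    then have "(\<lambda>n. G (0, Suc n)) sums (F0 - G (0, 0))" by (subst sums_Suc_iff) simp
    then show ?thesis using \<alpha>0 by (simp add: G_def)
  qed
  define g where "g = (\<lambda>p. G (snd p, fst p - snd p))"
  have "(g has_sum Tot) (Sigma UNIV (\<lambda>n. {..n})) = (G has_sum Tot) UNIV"
    by (rule has_sum_reindex_bij_witness[where i="\<lambda>(k, m). (k + m, k)" and j="\<lambda>(n, k). (k, n - k)"])
       (auto simp: g_def)
  with HG have Hg: "(g has_sum Tot) (Sigma UNIV (\<lambda>n. {..n}))" by simp
  define Dg where "Dg n = (\<Sum>k\<le>n. g (n, k))" for n
  have "(Dg has_sum Tot) UNIV"
    by (rule has_sum_Sigma'[OF Hg]) (simp add: Dg_def)
  then have Ds: "Dg sums Tot" by (rule has_sum_imp_sums)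
  have D0: "Dg 0 = 0" by (simp add: Dg_def g_def G_def)
  have DS: "Dg (Suc n) = cc a q (Suc n) * \<beta> (Suc n)" for n
  proof -
    have "Dg (Suc n) = (\<Sum>k\<le>Suc n. cc a q (Suc n) * (\<alpha> k * ww a q (Suc n) k))"
      unfolding Dg_def g_def G_def by (intro sum.cong) (auto simp: mult_ac)
    also have "\<dots> = cc a q (Suc n) * (\<Sum>k\<le>Suc n. \<alpha> k * ww a q (Suc n) k)"
      by (rule sum_distrib_left[symmetric])
    also have "(\<Sum>k\<le>Suc n. \<alpha> k * ww a q (Suc n) k) = \<beta> (Suc n)"
      using \<beta>def[of "Suc n"] by (simp add: ww_def atLeast0AtMost)
    finally show ?thesis .
  qed
  have sB: "(\<lambda>n. cc a q (Suc n) * \<beta> (Suc n)) sums Tot"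
  proof -
    have "(\<lambda>n. Dg (Suc n)) sums (Tot - Dg 0)" using Ds by (simp add: sums_Suc_iff)
    then show ?thesis using D0 by (simp add: DS)
  qed
  show ?thesis using sB sA s0 by blast
qed



lemma tele_k:
  fixes \<Phi> \<psi> :: "nat \<Rightarrow> complex"
  assumes "\<And>k. \<Phi> k - \<Phi> (Suc k) = \<psi> k" "\<Phi> \<longlonglongrightarrow> 0"
  shows "\<psi> sums \<Phi> 0"
  using telescope_sums'[OF assms(2)] assms(1) by simp

lemma suminf_family_lim0:
  fixes t :: "nat \<Rightarrow> nat \<Rightarrow> complex"
  assumes bnd: "\<And>k n. norm (t k n) \<le> C * r ^ k * e n" and e0: "\<And>n. 0 \<le> e n" and se: "summable e"
    and r0: "0 \<le> r" and r1: "r < 1"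
  shows "\<And>k. summable (t k)" "(\<lambda>k. suminf (t k)) \<longlonglongrightarrow> 0"
proof -
  have sn: "summable (\<lambda>n. norm (t k n))" for k
    by (rule summable_comparison_test'[where N=0, OF summable_mult[OF se, of "C * r ^ k"]]) (use bnd in simp)
  then show "\<And>k. summable (t k)" by (rule summable_norm_cancel)
  show "(\<lambda>k. suminf (t k)) \<longlonglongrightarrow> 0"
  proof (rule Lim_null_comparison)
    show "\<forall>\<^sub>F k in sequentially. norm (suminf (t k)) \<le> C * suminf e * r ^ k"
    proof (intro always_eventually allI)
      fix k
      have "norm (suminf (t k)) \<le> (\<Sum>n. norm (t k n))" by (rule summable_norm[OF sn])
      also have "\<dots> \<le> (\<Sum>n. C * r ^ k * e n)"
        by (rule suminf_le[OF bnd sn summable_mult[OF se]])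
      also have "\<dots> = C * suminf e * r ^ k" using suminf_mult[OF se, of "C * r ^ k"] by (simp add: mult_ac)
      finally show "norm (suminf (t k)) \<le> C * suminf e * r ^ k" .
    qed
    have "(\<lambda>k. C * suminf e * r ^ k) \<longlonglongrightarrow> C * suminf e * 0"
      by (intro tendsto_mult tendsto_const LIMSEQ_power_zero) (use r0 r1 in simp)
    then show "(\<lambda>k. C * suminf e * r ^ k) \<longlonglongrightarrow> 0" by simp
  qed
qed

definition tf :: "complex \<Rightarrow> complex \<Rightarrow> nat \<Rightarrow> complex" where
  "tf q x n = q ^ tri (Suc n) * (- x) ^ Suc n / (qpoch (q * x) q (Suc n) * (1 - q ^ Suc n))"

definition uf :: "complex \<Rightarrow> complex \<Rightarrow> nat \<Rightarrow> complex" where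
  "uf q x N = (- x) ^ N * q ^ tri N / qpoch (q * x) q N"

lemma norm_qaqk:
  fixes a q :: complex
  assumes "norm q < 1"
  shows "norm (q * (a * q ^ k)) \<le> norm (a * q)"
proof -
  have "norm (q * (a * q ^ k)) = norm (a * q) * norm q ^ k" by (simp add: norm_mult norm_power mult_ac)
  also have "\<dots> \<le> norm (a * q) * 1" using assms by (intro mult_left_mono) (auto simp: power_le_one)
  finally show ?thesis by simp
qed

lemma one_minus_qpow_lower:
  fixes q :: complex
  assumes "norm q < 1"
  shows "1 - norm q \<le> norm (1 - q ^ Suc n)"
proof -
  have "norm q ^ Suc n \<le> norm q" using assms by (intro power_decreasing[of 1, simplified]) auto
  then have h1: "norm (q ^ Suc n) \<le> norm q" by (simp only: norm_power)
  have h2: "1 - norm (q ^ Suc n) \<le> norm (1 - q ^ Suc n)"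
    using norm_triangle_ineq2[of 1 "q ^ Suc n"] by simp
  from h1 h2 show ?thesis by linarith
qed

lemma pow_k_le:
  fixes r :: real
  assumes "0 \<le> r" "r \<le> 1"
  shows "(r ^ k) ^ Suc n \<le> r ^ k"
  using assms by (simp del: power_Suc add: power_Suc[of "r^k"]) (intro mult_right_le_one_le, auto simp: power_le_one)

lemma tf_bound:
  fixes a q :: complex
  assumes hq: "norm q < 1" and haq: "norm (a * q) < 1"
  defines "\<delta> \<equiv> exp (- (norm (a * q) / ((1 - norm (a * q)) * (1 - norm q))))"
  shows "norm (tf q (a * q ^ k) n) \<le> (1 / (\<delta> * (1 - norm q))) * norm q ^ k * (norm a ^ Suc n * norm q ^ tri (Suc n))"
proof -
  have dl: "\<delta> \<le> norm (qpoch (q * (a * q ^ k)) q (Suc n))"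
    unfolding \<delta>_def by (rule qpoch_lower) (use hq haq norm_qaqk[OF hq] in auto)
  have dp: "0 < \<delta>" unfolding \<delta>_def by simp
  have ql: "1 - norm q \<le> norm (1 - q ^ Suc n)" by (rule one_minus_qpow_lower[OF hq])
  have q1: "0 < 1 - norm q" using hq by simp
  have num: "norm (a * q ^ k) ^ Suc n \<le> norm a ^ Suc n * norm q ^ k"
  proof -
    have "norm (a * q ^ k) ^ Suc n = norm a ^ Suc n * (norm q ^ k) ^ Suc n"
      by (simp add: norm_mult norm_power power_mult_distrib)
    also have "\<dots> \<le> norm a ^ Suc n * norm q ^ k"
      by (intro mult_left_mono pow_k_le) (use hq in auto)
    finally show ?thesis .
  qed
  have "norm (tf q (a * q ^ k) n) = norm q ^ tri (Suc n) * norm (a * q ^ k) ^ Suc n /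
      (norm (qpoch (q * (a * q ^ k)) q (Suc n)) * norm (1 - q ^ Suc n))"
    by (simp add: tf_def norm_mult norm_divide norm_power)
  also have "\<dots> \<le> norm q ^ tri (Suc n) * (norm a ^ Suc n * norm q ^ k) / (\<delta> * (1 - norm q))"
    using dl ql dp q1 num by (intro frac_le mult_left_mono mult_mono mult_pos_pos) auto
  also have "\<dots> = (1 / (\<delta> * (1 - norm q))) * norm q ^ k * (norm a ^ Suc n * norm q ^ tri (Suc n))"
    by (simp add: field_simps)
  finally show ?thesis .
qed

lemma tf_diff:
  fixes x q :: complex
  assumes hq: "norm q < 1" and hx: "norm (q * x) < 1"
  shows "tf q x n - tf q (x * q) n = uf q x (Suc n) - uf q x (Suc (Suc n))"
proof -
  define N where "N = Suc n"
  define P where "P = qpoch (q * x) q N"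
  define y where "y = q ^ N"
  define Z where "Z = q ^ tri N * (- x) ^ N / P"
  define v where "v = 1 - q * x * y"
  define t where "t = 1 - q * x"
  have Pnz: "P \<noteq> 0" unfolding P_def by (rule qpoch_nonzero[OF hq hx])
  have vnz: "v \<noteq> 0" using qpoch_nonzero[OF hq hx, of "Suc N"] by (simp add: qpoch_Suc v_def y_def)
  have tnz: "t \<noteq> 0" using qpoch_nonzero[OF hq hx, of 1] by (simp add: qpoch_Suc t_def)
  have ynz: "1 - y \<noteq> 0" unfolding y_def N_def by (rule one_minus_qpow_nz[OF hq]) simp
  have P': "qpoch (q * (x * q)) q N = P * v / t"
  proof -
    have "qpoch (q * x) q (Suc N) = P * v" by (simp add: qpoch_Suc P_def v_def y_def)
    moreover have "qpoch (q * x) q (Suc N) = t * qpoch (q * (x * q)) q N"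
      by (simp add: qpoch_Suc' t_def mult_ac)
    ultimately show ?thesis using tnz by (simp add: field_simps)
  qed
  have e1: "tf q x n = Z / (1 - y)"
    unfolding tf_def Z_def P_def y_def N_def by (simp add: mult_ac)
  have e2: "tf q (x * q) n = Z * (y * t / v) / (1 - y)"
  proof -
    have m: "(- (x * q)) ^ N = (- x) ^ N * y" unfolding y_def
      by (metis minus_mult_left power_mult_distrib)
    have "tf q (x * q) n = q ^ tri N * (- (x * q)) ^ N / (qpoch (q * (x * q)) q N * (1 - y))"
      unfolding tf_def N_def y_def by simp
    also have "\<dots> = q ^ tri N * (- x) ^ N * y / (qpoch (q * (x * q)) q N * (1 - y))"
      unfolding m by (simp add: mult_ac)
    finally have "tf q (x * q) n = q ^ tri N * (- x) ^ N * y / (qpoch (q * (x * q)) q N * (1 - y))" .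
    also have "\<dots> = Z * (y * t / v) / (1 - y)"
      unfolding P' Z_def using Pnz vnz tnz by (simp add: field_simps)
    finally show ?thesis .
  qed
  have e3: "uf q x (Suc n) = Z" unfolding uf_def Z_def P_def N_def by (simp add: mult_ac)
  have e4: "uf q x (Suc (Suc n)) = Z * ((- x) * (y * q) / v)"
  proof -
    have "uf q x (Suc N) = (- x) ^ N * (- x) * (q ^ tri N * (y * q)) / (P * v)"
      unfolding uf_def P_def v_def y_def by (simp add: qpoch_Suc tri_Suc power_add mult_ac)
    also have "\<dots> = Z * ((- x) * (y * q) / v)"
      unfolding Z_def by (simp add: mult_ac)
    finally show ?thesis unfolding N_def .
  qed
  have k: "1 / (1 - y) - (y * t / v) / (1 - y) = 1 - (- x) * (y * q) / v"
  proof -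
    have a1: "1 / (1 - y) = v / (v * (1 - y))" using vnz by simp
    have a2: "(y * t / v) / (1 - y) = (y * t) / (v * (1 - y))" by simp
    have "1 / (1 - y) - (y * t / v) / (1 - y) = (v - y * t) / (v * (1 - y))"
      unfolding a1 a2 by (rule diff_divide_distrib[symmetric])
    also have "v - y * t = 1 - y" unfolding v_def t_def by (simp add: algebra_simps)
    also have "(1 - y) / (v * (1 - y)) = 1 / v" using ynz by simp
    also have "1 / v = 1 - (- x) * (y * q) / v"
      using vnz unfolding v_def by (simp add: field_simps)
    finally show ?thesis .
  qed
  have "tf q x n - tf q (x * q) n = Z * (1 / (1 - y) - (y * t / v) / (1 - y))"
    unfolding e1 e2 by (simp add: algebra_simps)
  also have "\<dots> = uf q x (Suc n) - uf q x (Suc (Suc n))"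
    unfolding k e3 e4 by (simp add: algebra_simps)
  finally show ?thesis .
qed



lemma uf_lim:
  fixes x q :: complex
  assumes hq: "norm q < 1" and hx: "norm (q * x) < 1"
  shows "uf q x \<longlonglongrightarrow> 0"
proof (rule Lim_null_comparison)
  define \<delta> where "\<delta> = exp (- (norm (q * x) / ((1 - norm (q * x)) * (1 - norm q))))"
  have dl: "\<And>N. \<delta> \<le> norm (qpoch (q * x) q N)" unfolding \<delta>_def by (rule qpoch_lower) (use hq hx in auto)
  have dp: "0 < \<delta>" unfolding \<delta>_def by simp
  show "\<forall>\<^sub>F N in sequentially. norm (uf q x N) \<le> (norm x ^ N * norm q ^ tri N) / \<delta>"
  proof (intro always_eventually allI)
    fix N
    have "norm (uf q x N) = (norm x ^ N * norm q ^ tri N) / norm (qpoch (q * x) q N)"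
      by (simp add: uf_def norm_mult norm_divide norm_power)
    also have "\<dots> \<le> (norm x ^ N * norm q ^ tri N) / \<delta>"
      using dl[of N] dp by (intro divide_left_mono) (auto intro!: mult_pos_pos)
    finally show "norm (uf q x N) \<le> (norm x ^ N * norm q ^ tri N) / \<delta>" .
  qed
  have "summable (\<lambda>N. norm x ^ N * norm q ^ tri N)" by (rule summable_tri) (use hq in auto)
  then have "(\<lambda>N. norm x ^ N * norm q ^ tri N) \<longlonglongrightarrow> 0" by (rule summable_LIMSEQ_zero)
  then have "(\<lambda>N. (norm x ^ N * norm q ^ tri N) / \<delta>) \<longlonglongrightarrow> 0 / \<delta>" by (intro tendsto_divide tendsto_const) (use dp in auto)
  then show "(\<lambda>N. (norm x ^ N * norm q ^ tri N) / \<delta>) \<longlonglongrightarrow> 0" by simp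
qed

lemma tf_sum_diff:
  fixes x q :: complex
  assumes hq: "norm q < 1" and hx: "norm (q * x) < 1" and hxq: "norm (q * (x * q)) < 1"
    and s1: "summable (tf q x)" and s2: "summable (tf q (x * q))"
  shows "suminf (tf q x) - suminf (tf q (x * q)) = - (x * q / (1 - x * q))"
proof -
  have "(\<lambda>n. tf q x n - tf q (x * q) n) sums (suminf (tf q x) - suminf (tf q (x * q)))"
    by (intro sums_diff summable_sums s1 s2)
  moreover have "(\<lambda>n. tf q x n - tf q (x * q) n) sums (uf q x (Suc 0) - 0)"
  proof -
    have "(\<lambda>n. uf q x (Suc n)) \<longlonglongrightarrow> 0" by (rule LIMSEQ_Suc[OF uf_lim[OF hq hx]])
    from telescope_sums'[OF this] show ?thesis by (simp add: tf_diff[OF hq hx])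
  qed
  ultimately have "suminf (tf q x) - suminf (tf q (x * q)) = uf q x (Suc 0)" using sums_unique2 by force
  also have "\<dots> = - (x * q / (1 - x * q))" by (simp add: uf_def tri_def qpoch_Suc mult_ac)
  finally show ?thesis .
qed

lemma tf_lambert:
  fixes a q :: complex
  assumes hq: "norm q < 1" and haq: "norm (a * q) < 1"
  shows "(\<lambda>k. - (a * q ^ Suc k / (1 - a * q ^ Suc k))) sums suminf (tf q a)"
proof -
  define \<delta> where "\<delta> = exp (- (norm (a * q) / ((1 - norm (a * q)) * (1 - norm q))))"
  define e where "e n = norm a ^ Suc n * norm q ^ tri (Suc n)" for n
  have se: "summable e"
  proof -
    have "summable (\<lambda>m. norm a ^ m * norm q ^ tri m)" by (rule summable_tri) (use hq in auto)
    then show ?thesis unfolding e_def by (rule summable_Suc_iff[THEN iffD2])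
  qed
  have bnd: "\<And>k n. norm (tf q (a * q ^ k) n) \<le> (1 / (\<delta> * (1 - norm q))) * norm q ^ k * e n"
    unfolding \<delta>_def e_def by (rule tf_bound[OF hq haq])
  note L = suminf_family_lim0[OF bnd _ se _ hq, unfolded e_def, simplified]
  have sk: "\<And>k. summable (tf q (a * q ^ k))" by (rule L(1))
  have lim: "(\<lambda>k. suminf (tf q (a * q ^ k))) \<longlonglongrightarrow> 0" by (rule L(2))
  have nx: "\<And>k. norm (q * (a * q ^ k)) < 1" using norm_qaqk[OF hq] haq by (meson le_less_trans)
  have diff: "suminf (tf q (a * q ^ k)) - suminf (tf q (a * q ^ Suc k)) = - (a * q ^ Suc k / (1 - a * q ^ Suc k))" for k
  proof -
    have e: "a * q ^ Suc k = a * q ^ k * q" by (simp add: mult_ac)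
    have n2: "norm (q * (a * q ^ k * q)) < 1" using nx[of "Suc k"] by (simp add: mult_ac)
    have s2: "summable (tf q (a * q ^ k * q))" using sk[of "Suc k"] by (simp add: mult_ac)
    show ?thesis unfolding e by (rule tf_sum_diff[OF hq nx n2 sk s2])
  qed
  from tele_k[of "\<lambda>k. suminf (tf q (a * q ^ k))", OF diff lim] show ?thesis by simp
qed



definition tb :: "complex \<Rightarrow> complex \<Rightarrow> nat \<Rightarrow> complex" where
  "tb q x n = (1 - x * q ^ (2 * Suc n)) * q ^ (Suc n ^ 2) * x ^ Suc n / ((1 - x * q ^ Suc n) * (1 - q ^ Suc n))"

definition vb :: "complex \<Rightarrow> complex \<Rightarrow> nat \<Rightarrow> complex" where
  "vb q x N = x ^ N * q ^ (N ^ 2) / (1 - x * q ^ N)"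

lemma alg_b:
  fixes x y q d1 d2 d3 :: complex
  assumes e1: "d1 = 1 - x * y" and e2: "d2 = 1 - x * q * y" and e3: "d3 = 1 - y"
    and n1: "d1 \<noteq> 0" and n2: "d2 \<noteq> 0" and n3: "d3 \<noteq> 0"
  shows "(1 - x * y ^ 2) / (d1 * d3) - (1 - x * q * y ^ 2) * y / (d2 * d3) = 1 / d1 - x * y ^ 2 * q / d2"
proof -
  have "(1 - x * y ^ 2) / (d1 * d3) - (1 - x * q * y ^ 2) * y / (d2 * d3)
      = ((1 - x * y ^ 2) * d2 - (1 - x * q * y ^ 2) * y * d1) / (d1 * d2 * d3)"
    using n1 n2 n3 by (simp add: field_simps)
  also have "(1 - x * y ^ 2) * d2 - (1 - x * q * y ^ 2) * y * d1 = d2 * d3 - x * y ^ 2 * q * d1 * d3"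
    unfolding e1 e2 e3 by (simp add: algebra_simps power2_eq_square power3_eq_cube)
  also have "(d2 * d3 - x * y ^ 2 * q * d1 * d3) / (d1 * d2 * d3) = 1 / d1 - x * y ^ 2 * q / d2"
    using n1 n2 n3 by (simp add: field_simps)
  finally show ?thesis .
qed

lemma norm_aqm:
  fixes a q :: complex
  assumes "norm q < 1" "m \<ge> 1"
  shows "norm (a * q ^ m) \<le> norm (a * q)"
proof -
  obtain p where p: "m = Suc p" using assms by (cases m) auto
  have "norm (a * q ^ m) = norm (a * q) * norm q ^ p" by (simp add: p norm_mult norm_power mult_ac)
  also have "\<dots> \<le> norm (a * q) * 1" using assms by (intro mult_left_mono) (auto simp: power_le_one)
  finally show ?thesis by simp
qed

lemma one_minus_aqm:
  fixes a q :: complex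
  assumes "norm q < 1" "m \<ge> 1"
  shows "1 - norm (a * q) \<le> norm (1 - a * q ^ m)"
  using norm_aqm[OF assms, of a] norm_triangle_ineq2[of 1 "a * q ^ m"] by simp

lemma tb_diff:
  fixes x q :: complex
  assumes hq: "norm q < 1" and hx: "norm (x * q) < 1"
  shows "tb q x n - tb q (x * q) n = vb q x (Suc n) - vb q x (Suc (Suc n))"
proof -
  define N where "N = Suc n"
  define y where "y = q ^ N"
  define Q2 where "Q2 = q ^ (N ^ 2)"
  define W where "W = x ^ N * Q2"
  define d1 where "d1 = 1 - x * y"
  define d2 where "d2 = 1 - x * q * y"
  define d3 where "d3 = 1 - y"
  have pos: "0 < 1 - norm (x * q)" using hx by simp
  have n1: "d1 \<noteq> 0"
    using one_minus_aqm[OF hq, of N x] pos unfolding d1_def y_def N_def by (auto simp: mult_ac)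
  have n2: "d2 \<noteq> 0"
    using one_minus_aqm[OF hq, of "Suc N" x] pos unfolding d2_def y_def N_def by (auto simp: mult_ac)
  have n3: "d3 \<noteq> 0" unfolding d3_def y_def N_def by (rule one_minus_qpow_nz[OF hq]) simp
  have yy: "q ^ (2 * N) = y ^ 2" unfolding y_def by (metis power_mult mult.commute)
  have t1: "tb q x n = W * ((1 - x * y ^ 2) / (d1 * d3))"
  proof -
    have "tb q x n = (1 - x * q ^ (2 * N)) * Q2 * x ^ N / ((1 - x * q ^ N) * (1 - q ^ N))"
      unfolding tb_def N_def Q2_def by simp
    also have "\<dots> = W * ((1 - x * y ^ 2) / (d1 * d3))"
      unfolding yy y_def[symmetric] W_def d1_def d3_def by (simp add: mult_ac)
    finally show ?thesis .
  qed
  have xq: "(x * q) ^ N = x ^ N * y" unfolding y_def by (rule power_mult_distrib)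
  have t2: "tb q (x * q) n = W * ((1 - x * q * y ^ 2) * y / (d2 * d3))"
  proof -
    have "tb q (x * q) n = (1 - x * q * q ^ (2 * N)) * Q2 * (x * q) ^ N / ((1 - x * q * q ^ N) * (1 - q ^ N))"
      unfolding tb_def N_def Q2_def by simp
    also have "\<dots> = W * ((1 - x * q * y ^ 2) * y / (d2 * d3))"
      unfolding yy xq y_def[symmetric] W_def d2_def d3_def by (simp add: mult_ac)
    finally show ?thesis .
  qed
  have v1: "vb q x (Suc n) = W * (1 / d1)"
    unfolding vb_def W_def d1_def y_def Q2_def N_def by simp
  have sq: "Suc N ^ 2 = N ^ 2 + 2 * N + 1" by (simp add: power2_eq_square)
  have v2: "vb q x (Suc (Suc n)) = W * (x * y ^ 2 * q / d2)"
    unfolding vb_def W_def d2_def y_def Q2_def N_def[symmetric] sq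
    by (simp add: power_add power_mult[symmetric] mult.commute[of 2] mult_ac)
  have "tb q x n - tb q (x * q) n = W * ((1 - x * y ^ 2) / (d1 * d3) - (1 - x * q * y ^ 2) * y / (d2 * d3))"
    unfolding t1 t2 by (rule right_diff_distrib[symmetric])
  also have "\<dots> = W * (1 / d1 - x * y ^ 2 * q / d2)"
    unfolding alg_b[OF d1_def d2_def d3_def n1 n2 n3] ..
  also have "\<dots> = vb q x (Suc n) - vb q x (Suc (Suc n))"
    unfolding v1 v2 by (rule right_diff_distrib)
  finally show ?thesis .
qed



lemma qsq_le_tri:
  fixes r :: real
  assumes "0 \<le> r" "r < 1"
  shows "r ^ (N ^ 2) \<le> r ^ tri N"
  by (rule power_decreasing[OF tri_le_sq]) (use assms in auto)

lemma tb_bound: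
  fixes a q :: complex
  assumes hq: "norm q < 1" and haq: "norm (a * q) < 1"
  shows "norm (tb q (a * q ^ k) n) \<le> (2 / ((1 - norm (a * q)) * (1 - norm q))) * norm q ^ k * (norm a ^ Suc n * norm q ^ tri (Suc n))"
proof -
  define N where "N = Suc n"
  have c1: "norm (1 - a * q ^ k * q ^ (2 * N)) \<le> 2"
  proof -
    have "norm (a * q ^ (k + 2 * N)) \<le> norm (a * q)" by (rule norm_aqm[OF hq]) (simp add: N_def)
    then have "norm (a * q ^ k * q ^ (2 * N)) \<le> 1" using haq by (simp add: power_add mult.assoc)
    then show ?thesis using norm_triangle_ineq4[of 1 "a * q ^ k * q ^ (2 * N)"] by simp
  qed
  have c2: "1 - norm (a * q) \<le> norm (1 - a * q ^ k * q ^ N)"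
    using one_minus_aqm[OF hq, of "k + N" a] by (simp add: N_def power_add mult_ac)
  have c3: "1 - norm q \<le> norm (1 - q ^ N)" unfolding N_def by (rule one_minus_qpow_lower[OF hq])
  have c4: "norm q ^ (N ^ 2) \<le> norm q ^ tri N" by (rule qsq_le_tri) (use hq in auto)
  have c5: "norm (a * q ^ k) ^ N \<le> norm a ^ N * norm q ^ k"
  proof -
    have "norm (a * q ^ k) ^ N = norm a ^ N * (norm q ^ k) ^ Suc n"
      by (simp add: N_def norm_mult norm_power power_mult_distrib)
    also have "\<dots> \<le> norm a ^ N * norm q ^ k"
      by (intro mult_left_mono pow_k_le) (use hq in auto)
    finally show ?thesis .
  qed
  have p1: "0 < 1 - norm (a * q)" "0 < 1 - norm q" using hq haq by auto
  have "norm (tb q (a * q ^ k) n) = norm (1 - a * q ^ k * q ^ (2 * N)) * norm q ^ (N ^ 2) * norm (a * q ^ k) ^ N /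
       (norm (1 - a * q ^ k * q ^ N) * norm (1 - q ^ N))"
    unfolding tb_def N_def by (simp add: norm_mult norm_divide norm_power)
  also have "\<dots> \<le> 2 * norm q ^ tri N * (norm a ^ N * norm q ^ k) / ((1 - norm (a * q)) * (1 - norm q))"
    using c1 c2 c3 c4 c5 p1 by (intro frac_le mult_mono mult_pos_pos) auto
  also have "\<dots> = (2 / ((1 - norm (a * q)) * (1 - norm q))) * norm q ^ k * (norm a ^ Suc n * norm q ^ tri (Suc n))"
    by (simp add: N_def field_simps)
  finally show ?thesis .
qed

lemma vb_lim:
  fixes x q :: complex
  assumes hq: "norm q < 1" and hx: "norm (x * q) < 1"
  shows "vb q x \<longlonglongrightarrow> 0"
proof (rule Lim_null_comparison)
  have p: "0 < 1 - norm (x * q)" using hx by simp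
  show "\<forall>\<^sub>F N in sequentially. norm (vb q x N) \<le> (norm x ^ N * norm q ^ tri N) / (1 - norm (x * q))"
    unfolding eventually_sequentially
  proof (intro exI[of _ 1] allI impI)
    fix N :: nat assume N: "N \<ge> 1"
    have "norm (vb q x N) = (norm x ^ N * norm q ^ (N ^ 2)) / norm (1 - x * q ^ N)"
      by (simp add: vb_def norm_mult norm_divide norm_power)
    also have "\<dots> \<le> (norm x ^ N * norm q ^ tri N) / (1 - norm (x * q))"
      using one_minus_aqm[OF hq N, of x] qsq_le_tri[of "norm q" N] hq p
      by (intro frac_le mult_left_mono) auto
    finally show "norm (vb q x N) \<le> (norm x ^ N * norm q ^ tri N) / (1 - norm (x * q))" .
  qed
  have "summable (\<lambda>N. norm x ^ N * norm q ^ tri N)" by (rule summable_tri) (use hq in auto)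
  then have "(\<lambda>N. norm x ^ N * norm q ^ tri N) \<longlonglongrightarrow> 0" by (rule summable_LIMSEQ_zero)
  then have "(\<lambda>N. (norm x ^ N * norm q ^ tri N) / (1 - norm (x * q))) \<longlonglongrightarrow> 0 / (1 - norm (x * q))"
    by (intro tendsto_divide tendsto_const) (use p in auto)
  then show "(\<lambda>N. (norm x ^ N * norm q ^ tri N) / (1 - norm (x * q))) \<longlonglongrightarrow> 0" by simp
qed

lemma tb_sum_diff:
  fixes x q :: complex
  assumes hq: "norm q < 1" and hx: "norm (x * q) < 1"
    and s1: "summable (tb q x)" and s2: "summable (tb q (x * q))"
  shows "suminf (tb q x) - suminf (tb q (x * q)) = x * q / (1 - x * q)"
proof -
  have "(\<lambda>n. tb q x n - tb q (x * q) n) sums (suminf (tb q x) - suminf (tb q (x * q)))"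
    by (intro sums_diff summable_sums s1 s2)
  moreover have "(\<lambda>n. tb q x n - tb q (x * q) n) sums (vb q x (Suc 0) - 0)"
  proof -
    have "(\<lambda>n. vb q x (Suc n)) \<longlonglongrightarrow> 0" by (rule LIMSEQ_Suc[OF vb_lim[OF hq hx]])
    from telescope_sums'[OF this] show ?thesis by (simp add: tb_diff[OF hq hx])
  qed
  ultimately have "suminf (tb q x) - suminf (tb q (x * q)) = vb q x (Suc 0)" using sums_unique2 by force
  also have "\<dots> = x * q / (1 - x * q)" by (simp add: vb_def)
  finally show ?thesis .
qed

lemma tb_lambert:
  fixes a q :: complex
  assumes hq: "norm q < 1" and haq: "norm (a * q) < 1"
  shows "(\<lambda>k. a * q ^ Suc k / (1 - a * q ^ Suc k)) sums suminf (tb q a)"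
proof -
  define e where "e n = norm a ^ Suc n * norm q ^ tri (Suc n)" for n
  have se: "summable e"
  proof -
    have "summable (\<lambda>m. norm a ^ m * norm q ^ tri m)" by (rule summable_tri) (use hq in auto)
    then show ?thesis unfolding e_def by (rule summable_Suc_iff[THEN iffD2])
  qed
  have bnd: "\<And>k n. norm (tb q (a * q ^ k) n) \<le> (2 / ((1 - norm (a * q)) * (1 - norm q))) * norm q ^ k * e n"
    unfolding e_def by (rule tb_bound[OF hq haq])
  note L = suminf_family_lim0[OF bnd _ se _ hq, unfolded e_def, simplified]
  have sk: "\<And>k. summable (tb q (a * q ^ k))" by (rule L(1))
  have lim: "(\<lambda>k. suminf (tb q (a * q ^ k))) \<longlonglongrightarrow> 0" by (rule L(2))
  have nx: "\<And>k. norm (a * q ^ k * q) < 1"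
  proof -
    fix k
    have "norm (a * q ^ Suc k) \<le> norm (a * q)" by (rule norm_aqm[OF hq]) simp
    then show "norm (a * q ^ k * q) < 1" using haq by (simp add: mult_ac)
  qed
  have diff: "suminf (tb q (a * q ^ k)) - suminf (tb q (a * q ^ Suc k)) = a * q ^ Suc k / (1 - a * q ^ Suc k)" for k
  proof -
    have e: "a * q ^ Suc k = a * q ^ k * q" by (simp add: mult_ac)
    have s2: "summable (tb q (a * q ^ k * q))" using sk[of "Suc k"] by (simp add: mult_ac)
    show ?thesis unfolding e by (rule tb_sum_diff[OF hq nx sk s2])
  qed
  from tele_k[of "\<lambda>k. suminf (tb q (a * q ^ k))", OF diff lim] show ?thesis by simp
qed



theorem corollary3p2:
  fixes a q :: complex and \<alpha> \<beta> :: "nat \<Rightarrow> complex"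
  assumes hq: "norm q < 1"
    and haq: "norm (a * q) < 1"
    and hbp: "bailey_pair a q \<alpha> \<beta>"
    and hden1: "\<And>n. qpoch (a * q) q n \<noteq> 0"
    and hden2: "\<And>n. n \<ge> 1 \<Longrightarrow> 1 - a * q ^ n \<noteq> 0"
    and hden3: "\<And>n. n \<ge> 1 \<Longrightarrow> 1 - q ^ n \<noteq> 0"
    and hconvb: "summable (\<lambda>n. norm (qpoch q q n * (- a) ^ (Suc n) * q ^ (Suc n * (Suc n + 1) div 2) * \<beta> (Suc n)))"
    and hconva: "summable (\<lambda>n. norm (qpoch q q n * (- a) ^ (Suc n) * q ^ (Suc n * (Suc n + 1) div 2) / qpoch (q * a) q (Suc n) * \<alpha> (Suc n)))"
  shows
    "let S = (\<Sum>n. qpoch q q n * (- a) ^ (Suc n) * q ^ (Suc n * (Suc n + 1) div 2) * \<beta> (Suc n))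
           - (\<Sum>n. qpoch q q n * (- a) ^ (Suc n) * q ^ (Suc n * (Suc n + 1) div 2) / qpoch (q * a) q (Suc n) * \<alpha> (Suc n))
     in S = - (\<Sum>n. (1 - a * q ^ (2 * Suc n)) * q ^ (Suc n ^ 2) * a ^ Suc n / ((1 - a * q ^ Suc n) * (1 - q ^ Suc n)))
      \<and> S = (\<Sum>n. q ^ (Suc n * (Suc n + 1) div 2) * (- a) ^ Suc n / (qpoch (q * a) q (Suc n) * (1 - q ^ Suc n)))
      \<and> S = - (\<Sum>n. a * q ^ Suc n / (1 - a * q ^ Suc n))"
proof -
  have qa: "q * a = a * q" by (simp add: mult.commute)
  have eqA: "qpoch q q n * (- a) ^ (Suc n) * q ^ (Suc n * (Suc n + 1) div 2) / qpoch (q * a) q (Suc n) * \<alpha> (Suc n)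
      = cc a q (Suc n) / qpoch (a * q) q (Suc n) * \<alpha> (Suc n)" for n
    unfolding cc_def tri_def qa by simp
  have eqB: "qpoch q q n * (- a) ^ (Suc n) * q ^ (Suc n * (Suc n + 1) div 2) * \<beta> (Suc n)
      = cc a q (Suc n) * \<beta> (Suc n)" for n
    unfolding cc_def tri_def by simp
  have eqT: "q ^ (Suc n * (Suc n + 1) div 2) * (- a) ^ Suc n / (qpoch (q * a) q (Suc n) * (1 - q ^ Suc n))
      = tf q a n" for n
    unfolding tf_def tri_def by simp
  have eqF: "cc a q (Suc n) * ww a q (Suc n) 0 = tf q a n" for n
  proof -
    have nz: "qpoch q q n \<noteq> 0" by (rule qpoch_nonzero[OF hq hq])
    have "cc a q (Suc n) * ww a q (Suc n) 0
       = qpoch q q n * ((- a) ^ Suc n * q ^ tri (Suc n)) / (qpoch q q n * ((1 - q ^ Suc n) * qpoch (q * a) q (Suc n)))"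
      unfolding cc_def ww_def qa by (simp add: qpoch_Suc mult_ac)
    also have "\<dots> = tf q a n"
      unfolding tf_def using nz by (simp add: mult_ac)
    finally show ?thesis .
  qed
  have eqTB: "(1 - a * q ^ (2 * Suc n)) * q ^ (Suc n ^ 2) * a ^ Suc n / ((1 - a * q ^ Suc n) * (1 - q ^ Suc n))
      = tb q a n" for n
    unfolding tb_def by simp
  have hca: "summable (\<lambda>n. norm (cc a q (Suc n) / qpoch (a * q) q (Suc n) * \<alpha> (Suc n)))"
    using hconva unfolding eqA .
  obtain Tot F0 where sB: "(\<lambda>n. cc a q (Suc n) * \<beta> (Suc n)) sums Tot"
    and sA: "(\<lambda>n. cc a q (Suc n) / qpoch (a * q) q (Suc n) * \<alpha> (Suc n)) sums (Tot - F0)"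
    and s0: "(\<lambda>n. cc a q (Suc n) * ww a q (Suc n) 0) sums F0"
    using main_identity[OF hq haq hbp hca] by blast
  have F0: "F0 = suminf (tf q a)" using s0 unfolding eqF by (simp add: sums_iff)
  define Ls where "Ls = (\<Sum>n. a * q ^ Suc n / (1 - a * q ^ Suc n))"
  have tfL: "suminf (tf q a) = - Ls"
  proof -
    have s: "(\<lambda>k. - (a * q ^ Suc k / (1 - a * q ^ Suc k))) sums suminf (tf q a)" by (rule tf_lambert[OF hq haq])
    then have "(\<lambda>k. a * q ^ Suc k / (1 - a * q ^ Suc k)) sums (- suminf (tf q a))"
      using sums_minus by fastforce
    then show ?thesis unfolding Ls_def by (simp add: sums_iff)
  qed
  have tbL: "suminf (tb q a) = Ls"
    using tb_lambert[OF hq haq] unfolding Ls_def by (simp add: sums_iff)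
  have S: "(\<Sum>n. qpoch q q n * (- a) ^ (Suc n) * q ^ (Suc n * (Suc n + 1) div 2) * \<beta> (Suc n))
           - (\<Sum>n. qpoch q q n * (- a) ^ (Suc n) * q ^ (Suc n * (Suc n + 1) div 2) / qpoch (q * a) q (Suc n) * \<alpha> (Suc n))
      = F0"
  proof -
    have a1: "(\<Sum>n. cc a q (Suc n) / qpoch (a * q) q (Suc n) * \<alpha> (Suc n)) = Tot - F0"
      by (rule sums_unique[OF sA, symmetric])
    have b1: "(\<Sum>n. cc a q (Suc n) * \<beta> (Suc n)) = Tot" by (rule sums_unique[OF sB, symmetric])
    show ?thesis unfolding eqA eqB a1 b1 by simp
  qed
  show ?thesis
    unfolding Let_def S eqT eqTB F0 tfL tbL Ls_def by simp
qed

end
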